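(* Let $\alpha_1,\alpha_2,\beta_2,\beta_3,\beta_4,\delta_1,\delta_2,\delta_4$ be positive real constants, let $i_M>0$, and let $i\in C(\mathbb{R}_+,[0,i_M])$, where $\mathbb{R}_+=[0,\infty)$. Consider the system $$u_1'=u_1(1-u_1-\alpha_1u_2-\delta_1u_3),\qquad u_2'=\beta_2u_2(1-u_2-\alpha_2u_1-\delta_2u_4),$$ $$u_3'=\beta_3(u_2-u_3),\qquad u_4'=\beta_4\big(i(t)-u_4-\delta_4u_4u_2\big).$$ If $\mathbf{u}(0)=(u_1(0),u_2(0),u_3(0),u_4(0))\in\mathbb{R}_+^4$, then this system has a unique solution $\mathbf{u}$ defined for all $t\in\mathbb{R}_+$, and it satisfies $\mathbf{u}(t)\in\mathbb{R}_+^4$ for all $t\in\mathbb{R}_+$.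
   Context: This is a non-dimensionalised model of normal cell density $u_1$, tumour cell density $u_2$, excess acid concentration $u_3$ and chemotherapy drug concentration $u_4$, with drug infusion rate $i(t)$; $'$ denotes $d/dt$. *)

theory Defs
  imports "HOL-Analysis.Analysis"
begin

definition tumour_sol ::
  "real \<Rightarrow> real \<Rightarrow> real \<Rightarrow> real \<Rightarrow> real \<Rightarrow> real \<Rightarrow> real \<Rightarrow> real \<Rightarrow>
   (real \<Rightarrow> real) \<Rightarrow> real \<Rightarrow> real \<Rightarrow> real \<Rightarrow> real \<Rightarrow>
   (real \<Rightarrow> real) \<Rightarrow> (real \<Rightarrow> real) \<Rightarrow> (real \<Rightarrow> real) \<Rightarrow> (real \<Rightarrow> real) \<Rightarrow> bool"
where
  "tumour_sol \<alpha>1 \<alpha>2 \<beta>2 \<beta>3 \<beta>4 \<delta>1 \<delta>2 \<delta>4 i a1 a2 a3 a4 u1 u2 u3 u4 \<longleftrightarrow>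
     u1 0 = a1 \<and> u2 0 = a2 \<and> u3 0 = a3 \<and> u4 0 = a4 \<and>
     (\<forall>t\<ge>0.
        (u1 has_real_derivative
           u1 t * (1 - u1 t - \<alpha>1 * u2 t - \<delta>1 * u3 t)) (at t within {0..}) \<and>
        (u2 has_real_derivative
           \<beta>2 * u2 t * (1 - u2 t - \<alpha>2 * u1 t - \<delta>2 * u4 t)) (at t within {0..}) \<and>
        (u3 has_real_derivative \<beta>3 * (u2 t - u3 t)) (at t within {0..}) \<and>
        (u4 has_real_derivative
           \<beta>4 * (i t - u4 t - \<delta>4 * u4 t * u2 t)) (at t within {0..}))"

end

theory Submission
  imports Defs
begin


lemma at_within_local:
  fixes t :: real assumes "t \<ge> 0"
  shows "at t within {0..t+1} = at t within {0..}"
  by (rule at_within_nhd[where S="{..<t+1}"]) auto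

lemma integral_deriv_Ici:
  fixes f :: "real \<Rightarrow> 'a::banach"
  assumes "continuous_on {0..} f" "t \<ge> 0"
  shows "((\<lambda>u. integral {0..u} f) has_vector_derivative f t) (at t within {0..})"
proof -
  have "continuous_on {0..t+1} f" using assms(1) by (rule continuous_on_subset) auto
  from integral_has_vector_derivative[OF this, of t] assms(2)
  show ?thesis by (simp add: at_within_local[OF assms(2)])
qed

lemma cont_Ici_local:
  fixes g :: "real \<Rightarrow> 'a::topological_space"
  assumes "\<And>T. T \<ge> 0 \<Longrightarrow> continuous_on {0..T} g"
  shows "continuous_on {0..} g"
  unfolding continuous_on_eq_continuous_within
proof
  fix t :: real assume "t \<in> {0..}"
  hence t: "t \<ge> 0" by simp
  have "continuous (at t within {0..t+1}) g"
    using assms[of "t+1"] t by (simp add: continuous_on_eq_continuous_within)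
  thus "continuous (at t within {0..}) g" by (simp add: at_within_local[OF t])
qed

lemma comp_cont:
  fixes F :: "real \<Rightarrow> 'a::real_normed_vector \<Rightarrow> 'b::real_normed_vector"
  assumes cont: "\<And>x. continuous_on S (\<lambda>t. F t x)"
    and lip: "\<And>t x y. t \<in> S \<Longrightarrow> norm (F t x - F t y) \<le> L * norm (x - y)"
    and g: "continuous_on S g"
  shows "continuous_on S (\<lambda>t. F t (g t))"
  unfolding continuous_on_def
proof
  fix t0 assume t0: "t0 \<in> S"
  have A: "((\<lambda>t. F t (g t0)) \<longlongrightarrow> F t0 (g t0)) (at t0 within S)"
    using cont[of "g t0"] t0 by (simp add: continuous_on_def)
  have "((\<lambda>t. L * norm (g t - g t0)) \<longlongrightarrow> L * norm (g t0 - g t0)) (at t0 within S)"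
    using g t0 unfolding continuous_on_def by (intro tendsto_intros) auto
  hence B0: "((\<lambda>t. L * norm (g t - g t0)) \<longlongrightarrow> 0) (at t0 within S)" by simp
  have "((\<lambda>t. F t (g t) - F t (g t0)) \<longlongrightarrow> 0) (at t0 within S)"
    by (rule Lim_null_comparison[OF _ B0]) (unfold eventually_at_filter, intro always_eventually allI impI lip)
  from tendsto_add[OF this A]
  show "((\<lambda>t. F t (g t)) \<longlongrightarrow> F t0 (g t0)) (at t0 within S)" by simp
qed



lemma pow_integral:
  fixes c t :: real assumes "t \<ge> 0"
  shows "integral {0..t} (\<lambda>s. c * (s^n / fact n)) = c * (t^(Suc n) / fact (Suc n))"
proof -
  have "((\<lambda>s. c * (s^n / fact n)) has_integral
          (c * (t^(Suc n) / fact (Suc n)) - c * (0^(Suc n) / fact (Suc n)))) {0..t}"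
  proof (rule fundamental_theorem_of_calculus)
    show "0 \<le> t" using assms .
    fix s :: real
    have "((\<lambda>s. c * (s^(Suc n) / fact (Suc n))) has_real_derivative
             c * (real (Suc n) * s^n / fact (Suc n))) (at s within {0..t})"
    proof -
      have "((\<lambda>s. s^(Suc n)) has_real_derivative real (Suc n) * s^n) (at s within {0..t})"
        using DERIV_pow[of "Suc n" s "{0..t}"] by simp
      thus ?thesis by (intro DERIV_cmult DERIV_cdivide)
    qed
    moreover have "c * (real (Suc n) * s^n / fact (Suc n)) = c * (s^n / fact n)"
    proof -
      have "c * (real (Suc n) * s^n / fact (Suc n)) = c * (real (Suc n) * s^n / (real (Suc n) * fact n))"
        by (simp only: fact_Suc)
      also have "\<dots> = c * (s^n / fact n)"
        by (subst mult_divide_mult_cancel_left) auto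
      finally show ?thesis .
    qed
    ultimately show "((\<lambda>s. c * (s^(Suc n) / fact (Suc n))) has_vector_derivative c * (s^n / fact n))
        (at s within {0..t})"
      by (simp add: has_real_derivative_iff_has_vector_derivative)
  qed
  from integral_unique[OF this] show ?thesis by simp
qed

lemma picard:
  fixes F :: "real \<Rightarrow> 'a::banach \<Rightarrow> 'a" and a :: 'a
  assumes cont: "\<And>x. continuous_on {0..} (\<lambda>t. F t x)"
    and lip: "\<And>t x y. t \<in> {0..} \<Longrightarrow> norm (F t x - F t y) \<le> L * norm (x - y)"
    and bnd: "\<And>t x. t \<ge> 0 \<Longrightarrow> norm (F t x) \<le> B"
    and L: "L \<ge> 0"
  shows "\<exists>x. x 0 = a \<and> (\<forall>t\<ge>0. (x has_vector_derivative F t (x t)) (at t within {0..}))"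
proof -
  have B: "B \<ge> 0" using bnd[of 0 a] norm_ge_zero[of "F 0 a"] by linarith
  define Phi where "Phi = (\<lambda>(f::real \<Rightarrow> 'a) t. a + integral {0..t} (\<lambda>s. F s (f s)))"
  define X where "X n = (Phi ^^ n) (\<lambda>t. a)" for n
  have X0: "X 0 = (\<lambda>t. a)" and XS: "\<And>n. X (Suc n) = Phi (X n)" by (simp_all add: X_def)
  have XSt: "\<And>n t. X (Suc n) t = a + integral {0..t} (\<lambda>s. F s (X n s))"
    by (simp add: XS Phi_def)
  have Xc: "continuous_on {0..} (X n)" for n
  proof (induction n)
    case 0 show ?case by (simp add: X0)
  next
    case (Suc n)
    have gc: "continuous_on {0..} (\<lambda>s. F s (X n s))" by (rule comp_cont[OF cont lip Suc])
    show ?case unfolding continuous_on_eq_continuous_within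
    proof
      fix t :: real assume "t \<in> {0..}"
      from integral_deriv_Ici[OF gc] this
      have "((\<lambda>u. integral {0..u} (\<lambda>s. F s (X n s))) has_vector_derivative F t (X n t)) (at t within {0..})"
        by simp
      hence "continuous (at t within {0..}) (\<lambda>u. integral {0..u} (\<lambda>s. F s (X n s)))"
        by (rule has_vector_derivative_continuous)
      hence "continuous (at t within {0..}) (\<lambda>u. a + integral {0..u} (\<lambda>s. F s (X n s)))"
        by (intro continuous_intros)
      moreover have "X (Suc n) = (\<lambda>u. a + integral {0..u} (\<lambda>s. F s (X n s)))"
        by (rule ext, rule XSt)
      ultimately show "continuous (at t within {0..}) (X (Suc n))" by simp
    qed
  qed
  have gc: "continuous_on {0..} (\<lambda>s. F s (X n s))" for n by (rule comp_cont[OF cont lip Xc])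
  have gint: "(\<lambda>s. F s (X n s)) integrable_on {0..t}" for n t
    by (rule integrable_continuous_real, rule continuous_on_subset[OF gc]) auto
  have est: "norm (X (Suc n) t - X n t) \<le> B * L^n * (t^(Suc n) / fact (Suc n))" if "t \<ge> 0" for n t
    using that
  proof (induction n arbitrary: t)
    case 0
    have "norm (X (Suc 0) t - X 0 t) = norm (integral {0..t} (\<lambda>s. F s a))"
      by (simp add: XSt X0)
    also have "\<dots> \<le> integral {0..t} (\<lambda>s. B)"
      by (rule integral_norm_bound_integral) (auto intro!: bnd integrable_continuous_real continuous_intros cont[THEN continuous_on_subset])
    also have "\<dots> = B * t" using 0 by simp
    finally show ?case by simp
  next
    case (Suc n)
    have "X (Suc (Suc n)) t - X (Suc n) t
        = integral {0..t} (\<lambda>s. F s (X (Suc n) s)) - integral {0..t} (\<lambda>s. F s (X n s))"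
      by (simp only: XSt[of "Suc n" t] XSt[of n t]) simp
    also have "\<dots> = integral {0..t} (\<lambda>s. F s (X (Suc n) s) - F s (X n s))"
      by (rule integral_diff[symmetric, OF gint gint])
    also have "norm \<dots> \<le> integral {0..t} (\<lambda>s. (B * L^(Suc n)) * (s^(Suc n) / fact (Suc n)))"
    proof (rule integral_norm_bound_integral)
      show "(\<lambda>s. F s (X (Suc n) s) - F s (X n s)) integrable_on {0..t}"
        by (intro integrable_diff gint)
      show "(\<lambda>s. B * L ^ Suc n * (s ^ Suc n / fact (Suc n))) integrable_on {0..t}"
        by (auto intro!: integrable_continuous_real continuous_intros)
      fix s assume s: "s \<in> {0..t}"
      have "norm (F s (X (Suc n) s) - F s (X n s)) \<le> L * norm (X (Suc n) s - X n s)"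
        using s by (intro lip) auto
      also have "\<dots> \<le> L * (B * L^n * (s^(Suc n) / fact (Suc n)))"
        using Suc.IH[of s] s L by (intro mult_left_mono) auto
      finally show "norm (F s (X (Suc n) s) - F s (X n s)) \<le> B * L ^ Suc n * (s ^ Suc n / fact (Suc n))"
        by (simp add: algebra_simps)
    qed
    also have "\<dots> = B * L^(Suc n) * (t^(Suc (Suc n)) / fact (Suc (Suc n)))"
      by (rule pow_integral[OF Suc.prems])
    finally show ?case .
  qed
  define d where "d i t = X (Suc i) t - X i t" for i t
  have Xsum: "X n t = a + (\<Sum>i<n. d i t)" for n t
    unfolding d_def using sum_lessThan_telescope[of "\<lambda>i. X i t" n] by (simp add: X0)
  define x where "x t = a + (\<Sum>i. d i t)" for t
  have dbound: "norm (d n t) \<le> B * T * (inverse (fact n) * (L*T)^n)" if "0 \<le> t" "t \<le> T" for n t T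
  proof -
    have "norm (d n t) \<le> B * L^n * (t^(Suc n) / fact (Suc n))" using est that by (simp add: d_def)
    also have "\<dots> \<le> B * L^n * (T^(Suc n) / fact n)"
    proof (intro mult_left_mono)
      have "t^(Suc n) \<le> T^(Suc n)" using that by (intro power_mono) auto
      moreover have "fact n \<le> (fact (Suc n) :: real)" by (simp add: fact_mono)
      ultimately show "t ^ Suc n / fact (Suc n) \<le> T ^ Suc n / fact n"
        using that by (intro frac_le) auto
    qed (use B L in auto)
    also have "\<dots> = B * T * (inverse (fact n) * (L*T)^n)"
      by (simp add: power_mult_distrib field_simps)
    finally show ?thesis .
  qed
  have summ: "summable (\<lambda>n. B * T * (inverse (fact n) * (L*T)^n))" for T
    by (intro summable_mult summable_exp)
  have ulim: "uniform_limit {0..T} (\<lambda>n t. \<Sum>i<n. d i t) (\<lambda>t. \<Sum>i. d i t) sequentially" for T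
    by (rule Weierstrass_m_test[OF _ summ[of T]]) (auto intro: dbound)
  have dc: "continuous_on {0..} (d i)" for i unfolding d_def by (intro continuous_intros Xc)
  have xcT: "continuous_on {0..T} x" for T
  proof -
    have "continuous_on {0..T} (\<lambda>t. \<Sum>i. d i t)"
      by (rule uniform_limit_theorem[OF _ ulim])
        (auto intro!: always_eventually continuous_on_sum continuous_on_subset[OF dc])
    thus ?thesis unfolding x_def by (intro continuous_intros)
  qed
  have xc: "continuous_on {0..} x" by (rule cont_Ici_local[OF xcT])
  have Xlim: "uniform_limit {0..T} X x sequentially" for T
  proof -
    have "uniform_limit {0..T} (\<lambda>n t. a + (\<Sum>i<n. d i t)) (\<lambda>t. a + (\<Sum>i. d i t)) sequentially"
      using ulim[of T] unfolding uniform_limit_iff by (simp add: dist_norm)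
    thus ?thesis by (simp add: Xsum[abs_def] x_def[abs_def])
  qed
  have inteq: "x t = a + integral {0..t} (\<lambda>s. F s (x s))" if t: "t \<ge> 0" for t
  proof -
    have ul2: "uniform_limit {0..t} (\<lambda>n s. F s (X n s)) (\<lambda>s. F s (x s)) sequentially"
      unfolding uniform_limit_iff
    proof (intro allI impI)
      fix e :: real assume e: "e > 0"
      have "e / (L+1) > 0" using e L by auto
      with Xlim[of t] have ev: "\<forall>\<^sub>F n in sequentially. \<forall>s\<in>{0..t}. dist (X n s) (x s) < e / (L+1)"
        unfolding uniform_limit_iff by blast
      show "\<forall>\<^sub>F n in sequentially. \<forall>s\<in>{0..t}. dist (F s (X n s)) (F s (x s)) < e"
      proof (rule eventually_mono[OF ev], intro ballI)
        fix n s assume H: "\<forall>s\<in>{0..t}. dist (X n s) (x s) < e / (L+1)" and s: "s \<in> {0..t}"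
        have "dist (F s (X n s)) (F s (x s)) \<le> L * dist (X n s) (x s)"
          using lip[of s "X n s" "x s"] s by (simp add: dist_norm)
        also have "\<dots> \<le> L * (e / (L+1))" using H s L by (intro mult_left_mono) (auto intro: less_imp_le)
        also have "\<dots> < e" using e L by (simp add: field_simps)
        finally show "dist (F s (X n s)) (F s (x s)) < e" .
      qed
    qed
    obtain I J where I: "\<And>n. ((\<lambda>s. F s (X n s)) has_integral I n) {0..t}"
      and J: "((\<lambda>s. F s (x s)) has_integral J) {0..t}" and IJ: "I \<longlonglongrightarrow> J"
      by (rule uniform_limit_integral[OF ul2]) (auto intro: continuous_on_subset[OF gc])
    have "(\<lambda>n. X (Suc n) t) \<longlonglongrightarrow> a + J"
      using IJ by (simp add: XSt integral_unique[OF I] tendsto_add)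
    moreover have "(\<lambda>n. X (Suc n) t) \<longlonglongrightarrow> x t"
    proof -
      have "(\<lambda>n. X n t) \<longlonglongrightarrow> x t"
        using tendsto_uniform_limitI[OF Xlim[of t], of t] t by simp
      from LIMSEQ_Suc[OF this] show ?thesis by simp
    qed
    ultimately have "x t = a + J" by (rule LIMSEQ_unique[rotated])
    thus ?thesis by (simp add: integral_unique[OF J])
  qed
  have "x 0 = a" using inteq[of 0] by simp
  moreover have "(x has_vector_derivative F t (x t)) (at t within {0..})" if t: "t \<ge> 0" for t
  proof -
    have gx: "continuous_on {0..} (\<lambda>s. F s (x s))" by (rule comp_cont[OF cont lip xc])
    have "((\<lambda>u. a + integral {0..u} (\<lambda>s. F s (x s))) has_vector_derivative F t (x t)) (at t within {0..})"
      using integral_deriv_Ici[OF gx t] by (subst add.commute, simp add: has_vector_derivative_add_const)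
    thus ?thesis by (rule has_vector_derivative_transform[rotated 2]) (use t inteq in auto)
  qed
  ultimately show ?thesis by blast
qed



lemma uniq:
  fixes x y :: "real \<Rightarrow> 'a::real_inner"
  assumes dx: "\<And>t. t \<ge> 0 \<Longrightarrow> (x has_vector_derivative f t) (at t within {0..})"
    and dy: "\<And>t. t \<ge> 0 \<Longrightarrow> (y has_vector_derivative g t) (at t within {0..})"
    and x0: "x 0 = y 0" and K: "K \<ge> 0"
    and lipK: "\<And>t. 0 \<le> t \<Longrightarrow> t \<le> T \<Longrightarrow> norm (f t - g t) \<le> K * norm (x t - y t)"
    and tT: "0 \<le> t" "t \<le> T"
  shows "x t = y t"
proof -
  define w where "w s = x s - y s" for s
  define e where "e s = (w s \<bullet> w s) * exp (-(2*K) * s)" for s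
  have dw: "(w has_vector_derivative (f s - g s)) (at s within {0..})" if "s \<ge> 0" for s
    unfolding w_def using dx[OF that] dy[OF that] by (rule has_vector_derivative_diff)
  have wc: "continuous_on {0..} w"
    unfolding continuous_on_eq_continuous_within
    by (auto intro: has_vector_derivative_continuous[OF dw])
  have ec: "continuous_on {0..t} e"
    unfolding e_def by (intro continuous_intros continuous_on_subset[OF wc]) auto
  have de: "\<exists>D. DERIV e s :> D \<and> D \<le> 0" if s: "0 < s" "s < t" for s
  proof -
    have at: "at s within {0..} = at s" using s by (intro at_within_interior) auto
    define v where "v = f s - g s"
    have W: "(w has_derivative (\<lambda>h. h *\<^sub>R v)) (at s)"
      using dw[of s] s at by (simp add: has_vector_derivative_def v_def)
    have W2: "((\<lambda>s. w s \<bullet> w s) has_real_derivative 2 * (w s \<bullet> v)) (at s)"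
      unfolding has_field_derivative_def
      by (rule has_derivative_eq_rhs[OF has_derivative_inner[OF W W]])
        (auto simp: fun_eq_iff inner_commute algebra_simps)
    have E: "((\<lambda>s. exp (-(2*K) * s)) has_real_derivative exp (-(2*K) * s) * (-(2*K))) (at s)"
      by (auto intro!: derivative_eq_intros)
    define D where "D = 2 * (w s \<bullet> v) * exp (-(2*K) * s) + exp (-(2*K) * s) * (-(2*K)) * (w s \<bullet> w s)"
    have "DERIV e s :> D" unfolding e_def D_def by (rule DERIV_mult[OF W2 E])
    moreover have "D \<le> 0"
    proof -
      have "w s \<bullet> v \<le> norm (w s) * norm v" by (rule norm_cauchy_schwarz)
      also have "\<dots> \<le> norm (w s) * (K * norm (w s))"
        using lipK[of s] s tT unfolding v_def w_def by (intro mult_left_mono) auto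
      also have "\<dots> = K * (w s \<bullet> w s)" by (simp add: power2_norm_eq_inner[symmetric] power2_eq_square)
      finally have le: "w s \<bullet> v - K * (w s \<bullet> w s) \<le> 0" by simp
      have "D = (2 * exp (-(2*K) * s)) * (w s \<bullet> v - K * (w s \<bullet> w s))"
        unfolding D_def by (simp add: algebra_simps)
      also have "\<dots> \<le> 0" by (rule mult_nonneg_nonpos[OF _ le]) simp
      finally show ?thesis .
    qed
    ultimately show ?thesis by blast
  qed
  have "e t \<le> e 0" by (rule DERIV_nonpos_imp_decreasing_open[OF tT(1) de ec])
  moreover have "e 0 = 0" by (simp add: e_def w_def x0)
  ultimately have "(w t \<bullet> w t) * exp (-(2*K) * t) \<le> 0" by (simp add: e_def)
  hence "w t \<bullet> w t \<le> 0" by (simp add: mult_le_0_iff)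
  hence "w t \<bullet> w t = 0" using inner_ge_zero[of "w t"] by linarith
  hence "w t = 0" by simp
  thus ?thesis by (simp add: w_def)
qed

lemma stay_below:
  fixes u u' :: "real \<Rightarrow> real"
  assumes du: "\<And>t. t \<ge> 0 \<Longrightarrow> (u has_real_derivative u' t) (at t within {0..})"
    and u0: "u 0 \<le> M" and neg: "\<And>t. t > 0 \<Longrightarrow> u t > M \<Longrightarrow> u' t \<le> 0"
    and t: "t \<ge> 0"
  shows "u t \<le> M"
proof (rule ccontr)
  assume "\<not> u t \<le> M" hence ut: "u t > M" by simp
  have uc: "continuous_on {0..} u" by (rule DERIV_continuous_on[OF du]) auto
  define S where "S = {0..t} \<inter> u -` {..M}"
  have "closed S" unfolding S_def
    by (rule continuous_closed_preimage) (auto intro: continuous_on_subset[OF uc])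
  moreover have "bounded S" unfolding S_def by (rule bounded_subset[of "{0..t}"]) auto
  ultimately have "compact S" by (simp add: compact_eq_bounded_closed)
  moreover have "0 \<in> S" using t u0 by (simp add: S_def)
  ultimately obtain s0 where s0: "s0 \<in> S" and mx: "\<And>s. s \<in> S \<Longrightarrow> s \<le> s0"
    using compact_attains_sup[of S] by blast
  have s0t: "0 \<le> s0" "s0 \<le> t" "u s0 \<le> M" using s0 by (auto simp: S_def)
  have "\<exists>D. DERIV u s :> D \<and> D \<le> 0" if s: "s0 < s" "s < t" for s
  proof -
    have "s \<notin> S" using mx[of s] s by auto
    hence us: "u s > M" using s s0t by (auto simp: S_def)
    have at: "at s within {0..} = at s" using s s0t by (intro at_within_interior) auto
    have "DERIV u s :> u' s" using du[of s] s s0t at by simp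
    thus ?thesis using neg[of s] us s s0t by auto
  qed
  moreover have "continuous_on {s0..t} u" by (rule continuous_on_subset[OF uc]) (use s0t in auto)
  ultimately have "u t \<le> u s0" using DERIV_nonpos_imp_decreasing_open[OF s0t(2)] by blast
  thus False using ut s0t by simp
qed

lemma stay_above:
  fixes u u' :: "real \<Rightarrow> real"
  assumes du: "\<And>t. t \<ge> 0 \<Longrightarrow> (u has_real_derivative u' t) (at t within {0..})"
    and u0: "u 0 \<ge> 0" and pos: "\<And>t. t > 0 \<Longrightarrow> u t < 0 \<Longrightarrow> u' t \<ge> 0"
    and t: "t \<ge> 0"
  shows "u t \<ge> 0"
proof -
  have "(\<lambda>s. - u s) t \<le> 0"
  proof (rule stay_below[where u="\<lambda>s. - u s" and u'="\<lambda>s. - u' s" and M=0])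
    show "((\<lambda>s. - u s) has_real_derivative - u' s) (at s within {0..})" if "s \<ge> 0" for s
      using du[OF that] by (rule DERIV_minus)
  qed (use u0 pos t in auto)
  thus ?thesis by simp
qed



lemma norm4_le: "norm ((a::real), (b::real), (c::real), (d::real)) \<le> \<bar>a\<bar> + \<bar>b\<bar> + \<bar>c\<bar> + \<bar>d\<bar>"
proof -
  have "norm (a, b, c, d) \<le> norm a + norm (b, c, d)" by (rule norm_Pair_le)
  also have "norm (b, c, d) \<le> norm b + norm (c, d)" by (rule norm_Pair_le)
  also have "norm (c, d) \<le> norm c + norm d" by (rule norm_Pair_le)
  finally show ?thesis by simp
qed

lemma norm4_ge:
  fixes p :: "real \<times> real \<times> real \<times> real"
  shows "\<bar>fst p\<bar> \<le> norm p" "\<bar>fst (snd p)\<bar> \<le> norm p" "\<bar>fst (snd (snd p))\<bar> \<le> norm p"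
    "\<bar>snd (snd (snd p))\<bar> \<le> norm p"
proof -
  obtain a b c d where p: "p = (a, b, c, d)" by (cases p) auto
  have 1: "norm a \<le> norm (a, b, c, d)" by (rule norm_fst_le)
  have 2: "norm (b, c, d) \<le> norm (a, b, c, d)" by (rule norm_snd_le)
  have 3: "norm b \<le> norm (b, c, d)" by (rule norm_fst_le)
  have 4: "norm (c, d) \<le> norm (b, c, d)" by (rule norm_snd_le)
  have 5: "norm c \<le> norm (c, d)" by (rule norm_fst_le)
  have 6: "norm d \<le> norm (c, d)" by (rule norm_snd_le)
  show "\<bar>fst p\<bar> \<le> norm p" "\<bar>fst (snd p)\<bar> \<le> norm p" "\<bar>fst (snd (snd p))\<bar> \<le> norm p"
    "\<bar>snd (snd (snd p))\<bar> \<le> norm p"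
    using 1 2 3 4 5 6 by (simp_all add: p)
qed

lemma pb:
  fixes x y x' y' R N :: real
  assumes "\<bar>x\<bar> \<le> R" "\<bar>y'\<bar> \<le> R" "\<bar>x - x'\<bar> \<le> N" "\<bar>y - y'\<bar> \<le> N"
  shows "\<bar>x*y - x'*y'\<bar> \<le> 2*R*N"
proof -
  have "x*y - x'*y' = x*(y-y') + y'*(x-x')" by (simp add: algebra_simps)
  hence "\<bar>x*y - x'*y'\<bar> \<le> \<bar>x\<bar>*\<bar>y-y'\<bar> + \<bar>y'\<bar>*\<bar>x-x'\<bar>" by (simp add: abs_mult[symmetric] abs_triangle_ineq)
  also have "\<dots> \<le> R*N + R*N" using assms by (intro add_mono mult_mono) auto
  also have "\<dots> = 2*R*N" by simp
  finally show ?thesis .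
qed

lemma abs4: "\<bar>(w::real) - x - y - z\<bar> \<le> \<bar>w\<bar> + \<bar>x\<bar> + \<bar>y\<bar> + \<bar>z\<bar>" by arith

declare [[linarith_split_limit = 0]]

lemma cmul_bound: "\<bar>z\<bar> \<le> b \<Longrightarrow> \<bar>(c::real) * z\<bar> \<le> \<bar>c\<bar> * b"
  by (simp add: abs_mult mult_left_mono)

lemma comp1:
  fixes p1 p2 p3 q1 q2 q3 a d R N :: real
  assumes "\<bar>p1\<bar> \<le> R" "\<bar>p2\<bar> \<le> R" "\<bar>p3\<bar> \<le> R" "\<bar>q1\<bar> \<le> R" "\<bar>q2\<bar> \<le> R" "\<bar>q3\<bar> \<le> R"
    "\<bar>p1 - q1\<bar> \<le> N" "\<bar>p2 - q2\<bar> \<le> N" "\<bar>p3 - q3\<bar> \<le> N"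
  shows "\<bar>p1*(1-p1-a*p2-d*p3) - q1*(1-q1-a*q2-d*q3)\<bar> \<le> (1 + 2*R + \<bar>a\<bar>*(2*R) + \<bar>d\<bar>*(2*R)) * N"
proof -
  have h1: "\<bar>p1*p1 - q1*q1\<bar> \<le> 2*R*N" by (rule pb) (fact assms)+
  have h2: "\<bar>a*(p1*p2 - q1*q2)\<bar> \<le> \<bar>a\<bar>*(2*R*N)" by (rule cmul_bound, rule pb) (fact assms)+
  have h3: "\<bar>d*(p1*p3 - q1*q3)\<bar> \<le> \<bar>d\<bar>*(2*R*N)" by (rule cmul_bound, rule pb) (fact assms)+
  have eq: "p1*(1-p1-a*p2-d*p3) - q1*(1-q1-a*q2-d*q3)
      = (p1-q1) - (p1*p1-q1*q1) - a*(p1*p2-q1*q2) - d*(p1*p3-q1*q3)" by (simp add: algebra_simps)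
  have "\<bar>p1*(1-p1-a*p2-d*p3) - q1*(1-q1-a*q2-d*q3)\<bar> \<le> N + 2*R*N + \<bar>a\<bar>*(2*R*N) + \<bar>d\<bar>*(2*R*N)"
    unfolding eq using abs4[of "p1-q1" "p1*p1-q1*q1" "a*(p1*p2-q1*q2)" "d*(p1*p3-q1*q3)"] h1 h2 h3 assms(7)
    by linarith
  also have "\<dots> = (1 + 2*R + \<bar>a\<bar>*(2*R) + \<bar>d\<bar>*(2*R)) * N" by (simp add: algebra_simps)
  finally show ?thesis .
qed

context
  fixes \<alpha>1 \<alpha>2 \<beta>2 \<beta>3 \<beta>4 \<delta>1 \<delta>2 \<delta>4 :: real and i :: "real \<Rightarrow> real"
begin

definition G :: "real \<Rightarrow> real \<times> real \<times> real \<times> real \<Rightarrow> real \<times> real \<times> real \<times> real" where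
  "G t p = (fst p * (1 - fst p - \<alpha>1 * fst (snd p) - \<delta>1 * fst (snd (snd p))),
            \<beta>2 * fst (snd p) * (1 - fst (snd p) - \<alpha>2 * fst p - \<delta>2 * snd (snd (snd p))),
            \<beta>3 * (fst (snd p) - fst (snd (snd p))),
            \<beta>4 * (i t - snd (snd (snd p)) - \<delta>4 * snd (snd (snd p)) * fst (snd p)))"

definition KG :: "real \<Rightarrow> real" where
  "KG R = (1 + 2*R + \<bar>\<alpha>1\<bar>*(2*R) + \<bar>\<delta>1\<bar>*(2*R))
         + \<bar>\<beta>2\<bar> * (1 + 2*R + \<bar>\<alpha>2\<bar>*(2*R) + \<bar>\<delta>2\<bar>*(2*R))
         + \<bar>\<beta>3\<bar> * 2 + \<bar>\<beta>4\<bar> * (1 + \<bar>\<delta>4\<bar> * (2*R))"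

lemma KG_nonneg: "R \<ge> 0 \<Longrightarrow> KG R \<ge> 0"
  unfolding KG_def by (intro add_nonneg_nonneg mult_nonneg_nonneg) auto

lemma G_lip:
  assumes "norm p \<le> R" "norm q \<le> R"
  shows "norm (G t p - G t q) \<le> KG R * norm (p - q)"
proof -
  obtain p1 p2 p3 p4 where p: "p = (p1, p2, p3, p4)" by (cases p) auto
  obtain q1 q2 q3 q4 where q: "q = (q1, q2, q3, q4)" by (cases q) auto
  define N where "N = norm (p - q)"
  have np: "norm (p1,p2,p3,p4) \<le> R" using assms(1) unfolding p .
  have nq: "norm (q1,q2,q3,q4) \<le> R" using assms(2) unfolding q .
  have pq: "p - q = (p1 - q1, p2 - q2, p3 - q3, p4 - q4)" by (simp add: p q)
  have nd: "norm (p1 - q1, p2 - q2, p3 - q3, p4 - q4) \<le> N" unfolding N_def pq by (rule order_refl)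
  have bp: "\<bar>p1\<bar> \<le> R" "\<bar>p2\<bar> \<le> R" "\<bar>p3\<bar> \<le> R" "\<bar>p4\<bar> \<le> R"
    using order_trans[OF norm4_ge(1)[of "(p1,p2,p3,p4)"] np]
      order_trans[OF norm4_ge(2)[of "(p1,p2,p3,p4)"] np]
      order_trans[OF norm4_ge(3)[of "(p1,p2,p3,p4)"] np]
      order_trans[OF norm4_ge(4)[of "(p1,p2,p3,p4)"] np] by simp_all
  have bq: "\<bar>q1\<bar> \<le> R" "\<bar>q2\<bar> \<le> R" "\<bar>q3\<bar> \<le> R" "\<bar>q4\<bar> \<le> R"
    using order_trans[OF norm4_ge(1)[of "(q1,q2,q3,q4)"] nq]
      order_trans[OF norm4_ge(2)[of "(q1,q2,q3,q4)"] nq]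
      order_trans[OF norm4_ge(3)[of "(q1,q2,q3,q4)"] nq]
      order_trans[OF norm4_ge(4)[of "(q1,q2,q3,q4)"] nq] by simp_all
  have bd: "\<bar>p1 - q1\<bar> \<le> N" "\<bar>p2 - q2\<bar> \<le> N" "\<bar>p3 - q3\<bar> \<le> N" "\<bar>p4 - q4\<bar> \<le> N"
    using order_trans[OF norm4_ge(1)[of "(p1 - q1, p2 - q2, p3 - q3, p4 - q4)"] nd]
      order_trans[OF norm4_ge(2)[of "(p1 - q1, p2 - q2, p3 - q3, p4 - q4)"] nd]
      order_trans[OF norm4_ge(3)[of "(p1 - q1, p2 - q2, p3 - q3, p4 - q4)"] nd]
      order_trans[OF norm4_ge(4)[of "(p1 - q1, p2 - q2, p3 - q3, p4 - q4)"] nd] by simp_all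
  define D1 where "D1 = p1*(1-p1-\<alpha>1*p2-\<delta>1*p3) - q1*(1-q1-\<alpha>1*q2-\<delta>1*q3)"
  define D2 where "D2 = \<beta>2*p2*(1-p2-\<alpha>2*p1-\<delta>2*p4) - \<beta>2*q2*(1-q2-\<alpha>2*q1-\<delta>2*q4)"
  define D3 where "D3 = \<beta>3*(p2-p3) - \<beta>3*(q2-q3)"
  define D4 where "D4 = \<beta>4*(i t - p4 - \<delta>4*p4*p2) - \<beta>4*(i t - q4 - \<delta>4*q4*q2)"
  have e: "G t p - G t q = (D1, D2, D3, D4)" by (simp add: G_def p q D1_def D2_def D3_def D4_def)
  have 1: "\<bar>D1\<bar> \<le> (1 + 2*R + \<bar>\<alpha>1\<bar>*(2*R) + \<bar>\<delta>1\<bar>*(2*R)) * N"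
    unfolding D1_def by (rule comp1) (fact bp bq bd)+
  have i2: "\<bar>p2*(1-p2-\<alpha>2*p1-\<delta>2*p4) - q2*(1-q2-\<alpha>2*q1-\<delta>2*q4)\<bar> \<le> (1 + 2*R + \<bar>\<alpha>2\<bar>*(2*R) + \<bar>\<delta>2\<bar>*(2*R)) * N"
    by (rule comp1) (fact bp bq bd)+
  have "D2 = \<beta>2 * (p2*(1-p2-\<alpha>2*p1-\<delta>2*p4) - q2*(1-q2-\<alpha>2*q1-\<delta>2*q4))"
    unfolding D2_def by (simp add: algebra_simps)
  hence 2: "\<bar>D2\<bar> \<le> \<bar>\<beta>2\<bar> * ((1 + 2*R + \<bar>\<alpha>2\<bar>*(2*R) + \<bar>\<delta>2\<bar>*(2*R)) * N)"
    using cmul_bound[OF i2, of \<beta>2] by simp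
  have i3: "\<bar>(p2 - q2) - (p3 - q3)\<bar> \<le> 2 * N" using bd by arith
  have "D3 = \<beta>3 * ((p2 - q2) - (p3 - q3))" unfolding D3_def by (simp add: algebra_simps)
  hence 3: "\<bar>D3\<bar> \<le> \<bar>\<beta>3\<bar> * (2 * N)" using cmul_bound[OF i3, of \<beta>3] by simp
  have "\<bar>\<delta>4 * (p4*p2 - q4*q2)\<bar> \<le> \<bar>\<delta>4\<bar> * (2*R*N)" by (rule cmul_bound, rule pb) (fact bp bq bd)+
  hence i4: "\<bar>-(p4 - q4) - \<delta>4 * (p4*p2 - q4*q2)\<bar> \<le> N + \<bar>\<delta>4\<bar> * (2*R*N)" using bd by arith
  have "D4 = \<beta>4 * (-(p4 - q4) - \<delta>4 * (p4*p2 - q4*q2))" unfolding D4_def by (simp add: algebra_simps)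
  hence 4: "\<bar>D4\<bar> \<le> \<bar>\<beta>4\<bar> * (N + \<bar>\<delta>4\<bar> * (2*R*N))" using cmul_bound[OF i4, of \<beta>4] by simp
  have "norm (G t p - G t q) \<le> \<bar>D1\<bar> + \<bar>D2\<bar> + \<bar>D3\<bar> + \<bar>D4\<bar>" unfolding e by (rule norm4_le)
  also have "\<dots> \<le> (1 + 2*R + \<bar>\<alpha>1\<bar>*(2*R) + \<bar>\<delta>1\<bar>*(2*R)) * N
      + \<bar>\<beta>2\<bar> * ((1 + 2*R + \<bar>\<alpha>2\<bar>*(2*R) + \<bar>\<delta>2\<bar>*(2*R)) * N) + \<bar>\<beta>3\<bar> * (2 * N)
      + \<bar>\<beta>4\<bar> * (N + \<bar>\<delta>4\<bar> * (2*R*N))" using 1 2 3 4 by linarith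
  also have "\<dots> = KG R * N" unfolding KG_def by (simp add: algebra_simps)
  finally show ?thesis unfolding N_def .
qed

end

declare [[linarith_split_limit = 9]]



lemma vd_fst: "(f has_vector_derivative v) F \<Longrightarrow> ((\<lambda>t. fst (f t)) has_vector_derivative fst v) F"
  unfolding has_vector_derivative_def by (drule has_derivative_fst) simp

lemma vd_snd: "(f has_vector_derivative v) F \<Longrightarrow> ((\<lambda>t. snd (f t)) has_vector_derivative snd v) F"
  unfolding has_vector_derivative_def by (drule has_derivative_snd) simp

definition cl :: "real \<Rightarrow> real \<Rightarrow> real" where "cl M x = max 0 (min M x)"

lemma cl_props:
  assumes "M \<ge> 0"
  shows "0 \<le> cl M x" "cl M x \<le> M" "x \<ge> M \<Longrightarrow> cl M x = M" "x \<le> 0 \<Longrightarrow> cl M x = 0"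
    "0 \<le> x \<Longrightarrow> x \<le> M \<Longrightarrow> cl M x = x" "\<bar>cl M x - cl M y\<bar> \<le> \<bar>x - y\<bar>"
  using assms by (auto simp: cl_def max_def min_def abs_if)

definition clp :: "real \<Rightarrow> real \<times> real \<times> real \<times> real \<Rightarrow> real \<times> real \<times> real \<times> real" where
  "clp M p = (cl M (fst p), cl M (fst (snd p)), cl M (fst (snd (snd p))), cl M (snd (snd (snd p))))"

lemma clp_norm: assumes "M \<ge> 0" shows "norm (clp M p) \<le> 4 * M"
proof -
  have "norm (clp M p) \<le> \<bar>cl M (fst p)\<bar> + \<bar>cl M (fst (snd p))\<bar> + \<bar>cl M (fst (snd (snd p)))\<bar> + \<bar>cl M (snd (snd (snd p)))\<bar>"
    unfolding clp_def by (rule norm4_le)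
  also have "\<dots> \<le> M + M + M + M" using cl_props[OF assms] by (intro add_mono) auto
  finally show ?thesis by simp
qed

lemma clp_lip: assumes "M \<ge> 0" shows "norm (clp M p - clp M q) \<le> 4 * norm (p - q)"
proof -
  have e: "clp M p - clp M q = (cl M (fst p) - cl M (fst q), cl M (fst (snd p)) - cl M (fst (snd q)),
     cl M (fst (snd (snd p))) - cl M (fst (snd (snd q))), cl M (snd (snd (snd p))) - cl M (snd (snd (snd q))))"
    by (simp add: clp_def)
  have "norm (clp M p - clp M q) \<le> \<bar>cl M (fst p) - cl M (fst q)\<bar> + \<bar>cl M (fst (snd p)) - cl M (fst (snd q))\<bar>
     + \<bar>cl M (fst (snd (snd p))) - cl M (fst (snd (snd q)))\<bar> + \<bar>cl M (snd (snd (snd p))) - cl M (snd (snd (snd q)))\<bar>"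
    unfolding e by (rule norm4_le)
  also have "\<dots> \<le> norm (p - q) + norm (p - q) + norm (p - q) + norm (p - q)"
  proof -
    have n: "\<bar>fst p - fst q\<bar> \<le> norm (p - q)" "\<bar>fst (snd p) - fst (snd q)\<bar> \<le> norm (p - q)"
      "\<bar>fst (snd (snd p)) - fst (snd (snd q))\<bar> \<le> norm (p - q)"
      "\<bar>snd (snd (snd p)) - snd (snd (snd q))\<bar> \<le> norm (p - q)"
      using norm4_ge[of "p - q"] by simp_all
    show ?thesis
      by (intro add_mono order_trans[OF cl_props(6)[OF assms]] n)
  qed
  finally show ?thesis by simp
qed

theorem theorem2p1:
  fixes \<alpha>1 \<alpha>2 \<beta>2 \<beta>3 \<beta>4 \<delta>1 \<delta>2 \<delta>4 iM a1 a2 a3 a4 :: real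
    and i :: "real \<Rightarrow> real"
  assumes "\<alpha>1 > 0" "\<alpha>2 > 0" "\<beta>2 > 0" "\<beta>3 > 0" "\<beta>4 > 0"
    and "\<delta>1 > 0" "\<delta>2 > 0" "\<delta>4 > 0" and "iM > 0"
    and "continuous_on {0..} i" and "\<forall>t\<ge>0. 0 \<le> i t \<and> i t \<le> iM"
    and "a1 \<ge> 0" "a2 \<ge> 0" "a3 \<ge> 0" "a4 \<ge> 0"
  shows "\<exists>u1 u2 u3 u4.
           tumour_sol \<alpha>1 \<alpha>2 \<beta>2 \<beta>3 \<beta>4 \<delta>1 \<delta>2 \<delta>4 i a1 a2 a3 a4 u1 u2 u3 u4 \<and>
           (\<forall>t\<ge>0. u1 t \<ge> 0 \<and> u2 t \<ge> 0 \<and> u3 t \<ge> 0 \<and> u4 t \<ge> 0) \<and>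
           (\<forall>v1 v2 v3 v4.
              tumour_sol \<alpha>1 \<alpha>2 \<beta>2 \<beta>3 \<beta>4 \<delta>1 \<delta>2 \<delta>4 i a1 a2 a3 a4 v1 v2 v3 v4 \<longrightarrow>
              (\<forall>t\<ge>0. v1 t = u1 t \<and> v2 t = u2 t \<and> v3 t = u3 t \<and> v4 t = u4 t))"
proof -
  note pos = assms(1-9)
  note icont = assms(10)
  have ib: "0 \<le> i t" "i t \<le> iM" if "t \<ge> 0" for t using assms(11) that by auto
  define M where "M = max 1 (max a1 (max a2 (max a3 (max a4 iM))))"
  have M: "M \<ge> 1" "M \<ge> 0" "a1 \<le> M" "a2 \<le> M" "a3 \<le> M" "a4 \<le> M" "iM \<le> M" by (auto simp: M_def)
  note clM = cl_props[OF M(2)]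
  define g where "g = G \<alpha>1 \<alpha>2 \<beta>2 \<beta>3 \<beta>4 \<delta>1 \<delta>2 \<delta>4 i"
  define K where "K = KG \<alpha>1 \<alpha>2 \<beta>2 \<beta>3 \<beta>4 \<delta>1 \<delta>2 \<delta>4"
  have glip: "norm (g t p - g t q) \<le> K R * norm (p - q)" if "norm p \<le> R" "norm q \<le> R" for t p q R
    unfolding g_def K_def by (rule G_lip[OF that])
  have Knn: "K R \<ge> 0" if "R \<ge> 0" for R unfolding K_def by (rule KG_nonneg[OF that])
  define F where "F t p = g t (clp M p)" for t p
  have lipF: "norm (F t p - F t q) \<le> (K (4*M) * 4) * norm (p - q)" if "t \<in> {0..}" for t p q
  proof -
    have "norm (F t p - F t q) \<le> K (4*M) * norm (clp M p - clp M q)"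
      unfolding F_def by (rule glip) (auto intro: clp_norm[OF M(2)])
    also have "\<dots> \<le> K (4*M) * (4 * norm (p - q))"
      using Knn[of "4*M"] M by (intro mult_left_mono clp_lip) auto
    finally show ?thesis by simp
  qed
  have bndF: "norm (F t p) \<le> K (4*M) * (4*M) + \<bar>\<beta>4\<bar> * iM" if "t \<ge> 0" for t p
  proof -
    have "norm (F t p) \<le> norm (F t p - g t 0) + norm (g t 0)" by (metis add.commute norm_triangle_sub)
    also have "norm (F t p - g t 0) \<le> K (4*M) * norm (clp M p - 0)"
      unfolding F_def by (rule glip) (use M in \<open>auto intro: clp_norm\<close>)
    also have "\<dots> \<le> K (4*M) * (4*M)"
      using Knn[of "4*M"] M clp_norm[OF M(2), of p] by (intro mult_left_mono) auto
    also have "norm (g t 0) = \<bar>\<beta>4 * i t\<bar>" by (simp add: g_def G_def)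
    also have "\<dots> \<le> \<bar>\<beta>4\<bar> * iM" using ib[OF that] by (simp add: abs_mult mult_left_mono)
    finally show ?thesis by simp
  qed
  have contF: "continuous_on {0..} (\<lambda>t. F t p)" for p
    unfolding F_def g_def G_def by (intro continuous_intros icont)
  obtain x where x0: "x 0 = (a1, a2, a3, a4)"
    and dxF: "\<And>t. t \<ge> 0 \<Longrightarrow> (x has_vector_derivative F t (x t)) (at t within {0..})"
    using picard[OF contF lipF bndF, of "(a1, a2, a3, a4)"] Knn[of "4*M"] M by auto
  define u1 where "u1 t = fst (x t)" for t
  define u2 where "u2 t = fst (snd (x t))" for t
  define u3 where "u3 t = fst (snd (snd (x t)))" for t
  define u4 where "u4 t = snd (snd (snd (x t)))" for t
  define c1 where "c1 t = cl M (u1 t)" for t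
  define c2 where "c2 t = cl M (u2 t)" for t
  define c3 where "c3 t = cl M (u3 t)" for t
  define c4 where "c4 t = cl M (u4 t)" for t
  have Fx: "F t (x t) = (c1 t * (1 - c1 t - \<alpha>1 * c2 t - \<delta>1 * c3 t),
        \<beta>2 * c2 t * (1 - c2 t - \<alpha>2 * c1 t - \<delta>2 * c4 t), \<beta>3 * (c2 t - c3 t),
        \<beta>4 * (i t - c4 t - \<delta>4 * c4 t * c2 t))" for t
    by (simp add: F_def g_def G_def clp_def c1_def c2_def c3_def c4_def u1_def u2_def u3_def u4_def)
  have d1: "(u1 has_real_derivative c1 t * (1 - c1 t - \<alpha>1 * c2 t - \<delta>1 * c3 t)) (at t within {0..})"
    if "t \<ge> 0" for t
    using vd_fst[OF dxF[OF that]] unfolding has_real_derivative_iff_has_vector_derivative u1_def[abs_def] Fx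
    by simp
  have d2: "(u2 has_real_derivative \<beta>2 * c2 t * (1 - c2 t - \<alpha>2 * c1 t - \<delta>2 * c4 t)) (at t within {0..})"
    if "t \<ge> 0" for t
    using vd_fst[OF vd_snd[OF dxF[OF that]]] unfolding has_real_derivative_iff_has_vector_derivative u2_def[abs_def] Fx
    by simp
  have d3: "(u3 has_real_derivative \<beta>3 * (c2 t - c3 t)) (at t within {0..})"
    if "t \<ge> 0" for t
    using vd_fst[OF vd_snd[OF vd_snd[OF dxF[OF that]]]] unfolding has_real_derivative_iff_has_vector_derivative u3_def[abs_def] Fx
    by simp
  have d4: "(u4 has_real_derivative \<beta>4 * (i t - c4 t - \<delta>4 * c4 t * c2 t)) (at t within {0..})"
    if "t \<ge> 0" for t
    using vd_snd[OF vd_snd[OF vd_snd[OF dxF[OF that]]]] unfolding has_real_derivative_iff_has_vector_derivative u4_def[abs_def] Fx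
    by simp
  have u0: "u1 0 = a1" "u2 0 = a2" "u3 0 = a3" "u4 0 = a4" by (simp_all add: u1_def u2_def u3_def u4_def x0)
  have cb: "0 \<le> c1 t" "c1 t \<le> M" "0 \<le> c2 t" "c2 t \<le> M" "0 \<le> c3 t" "c3 t \<le> M" "0 \<le> c4 t" "c4 t \<le> M" for t
    by (simp_all add: c1_def c2_def c3_def c4_def clM)
  have up1: "u1 t \<le> M" if "t \<ge> 0" for t
  proof (rule stay_below[OF d1 _ _ that])
    show "u1 0 \<le> M" using u0 M by simp
    fix s :: real assume "s > 0" "u1 s > M"
    hence "c1 s = M" by (simp add: c1_def clM)
    moreover have "1 - M - \<alpha>1 * c2 s - \<delta>1 * c3 s \<le> 0"
      using M cb[of s] pos mult_nonneg_nonneg[of \<alpha>1 "c2 s"] mult_nonneg_nonneg[of \<delta>1 "c3 s"] by linarith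
    ultimately show "c1 s * (1 - c1 s - \<alpha>1 * c2 s - \<delta>1 * c3 s) \<le> 0"
      using M by (simp add: mult_nonneg_nonpos)
  qed
  have lo1: "u1 t \<ge> 0" if "t \<ge> 0" for t
  proof (rule stay_above[OF d1 _ _ that])
    show "u1 0 \<ge> 0" using u0 pos assms(12) by simp
    fix s :: real assume "s > 0" "u1 s < 0"
    hence "c1 s = 0" by (simp add: c1_def clM)
    thus "c1 s * (1 - c1 s - \<alpha>1 * c2 s - \<delta>1 * c3 s) \<ge> 0" by simp
  qed
  have up2: "u2 t \<le> M" if "t \<ge> 0" for t
  proof (rule stay_below[OF d2 _ _ that])
    show "u2 0 \<le> M" using u0 M by simp
    fix s :: real assume "s > 0" "u2 s > M"
    hence "c2 s = M" by (simp add: c2_def clM)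
    moreover have "1 - M - \<alpha>2 * c1 s - \<delta>2 * c4 s \<le> 0"
      using M cb[of s] pos mult_nonneg_nonneg[of \<alpha>2 "c1 s"] mult_nonneg_nonneg[of \<delta>2 "c4 s"] by linarith
    moreover have "\<beta>2 * M \<ge> 0" using pos M by simp
    ultimately show "\<beta>2 * c2 s * (1 - c2 s - \<alpha>2 * c1 s - \<delta>2 * c4 s) \<le> 0"
      by (simp add: mult_nonneg_nonpos)
  qed
  have lo2: "u2 t \<ge> 0" if "t \<ge> 0" for t
  proof (rule stay_above[OF d2 _ _ that])
    show "u2 0 \<ge> 0" using u0 assms(13) by simp
    fix s :: real assume "s > 0" "u2 s < 0"
    hence "c2 s = 0" by (simp add: c2_def clM)
    thus "\<beta>2 * c2 s * (1 - c2 s - \<alpha>2 * c1 s - \<delta>2 * c4 s) \<ge> 0" by simp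
  qed
  have up3: "u3 t \<le> M" if "t \<ge> 0" for t
  proof (rule stay_below[OF d3 _ _ that])
    show "u3 0 \<le> M" using u0 M by simp
    fix s :: real assume "s > 0" "u3 s > M"
    hence "c3 s = M" by (simp add: c3_def clM)
    hence "c2 s - c3 s \<le> 0" using cb[of s] by simp
    thus "\<beta>3 * (c2 s - c3 s) \<le> 0" using pos by (simp add: mult_nonneg_nonpos)
  qed
  have lo3: "u3 t \<ge> 0" if "t \<ge> 0" for t
  proof (rule stay_above[OF d3 _ _ that])
    show "u3 0 \<ge> 0" using u0 assms(14) by simp
    fix s :: real assume "s > 0" "u3 s < 0"
    hence "c3 s = 0" by (simp add: c3_def clM)
    thus "\<beta>3 * (c2 s - c3 s) \<ge> 0" using pos cb[of s] by simp
  qed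
  have up4: "u4 t \<le> M" if "t \<ge> 0" for t
  proof (rule stay_below[OF d4 _ _ that])
    show "u4 0 \<le> M" using u0 M by simp
    fix s :: real assume s: "s > 0" "u4 s > M"
    hence "c4 s = M" by (simp add: c4_def clM)
    moreover have "\<delta>4 * M * c2 s \<ge> 0" using pos M cb[of s] by simp
    ultimately have "i s - c4 s - \<delta>4 * c4 s * c2 s \<le> 0" using ib[of s] s M by simp
    thus "\<beta>4 * (i s - c4 s - \<delta>4 * c4 s * c2 s) \<le> 0" using pos by (simp add: mult_nonneg_nonpos)
  qed
  have lo4: "u4 t \<ge> 0" if "t \<ge> 0" for t
  proof (rule stay_above[OF d4 _ _ that])
    show "u4 0 \<ge> 0" using u0 assms(15) by simp
    fix s :: real assume s: "s > 0" "u4 s < 0"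
    hence "c4 s = 0" by (simp add: c4_def clM)
    thus "\<beta>4 * (i s - c4 s - \<delta>4 * c4 s * c2 s) \<ge> 0" using pos ib[of s] s by simp
  qed
  have cid: "c1 t = u1 t" "c2 t = u2 t" "c3 t = u3 t" "c4 t = u4 t" if "t \<ge> 0" for t
    using up1[OF that] lo1[OF that] up2[OF that] lo2[OF that] up3[OF that] lo3[OF that]
      up4[OF that] lo4[OF that]
    by (simp_all add: c1_def c2_def c3_def c4_def clM)
  have xsplit: "x t = (u1 t, u2 t, u3 t, u4 t)" for t by (simp add: u1_def u2_def u3_def u4_def)
  have Fg: "F t (x t) = g t (x t)" if "t \<ge> 0" for t
    unfolding Fx using cid[OF that] by (simp add: g_def G_def xsplit)
  have dx: "(x has_vector_derivative g t (x t)) (at t within {0..})" if "t \<ge> 0" for t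
    using dxF[OF that] Fg[OF that] by simp
  have sol: "tumour_sol \<alpha>1 \<alpha>2 \<beta>2 \<beta>3 \<beta>4 \<delta>1 \<delta>2 \<delta>4 i a1 a2 a3 a4 u1 u2 u3 u4"
    unfolding tumour_sol_def
  proof (intro conjI allI impI u0)
    fix t :: real assume t: "t \<ge> 0"
    show "(u1 has_real_derivative u1 t * (1 - u1 t - \<alpha>1 * u2 t - \<delta>1 * u3 t)) (at t within {0..})"
      using d1[OF t] cid[OF t] by simp
    show "(u2 has_real_derivative \<beta>2 * u2 t * (1 - u2 t - \<alpha>2 * u1 t - \<delta>2 * u4 t)) (at t within {0..})"
      using d2[OF t] cid[OF t] by simp
    show "(u3 has_real_derivative \<beta>3 * (u2 t - u3 t)) (at t within {0..})"
      using d3[OF t] cid[OF t] by simp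
    show "(u4 has_real_derivative \<beta>4 * (i t - u4 t - \<delta>4 * u4 t * u2 t)) (at t within {0..})"
      using d4[OF t] cid[OF t] by simp
  qed
  have xc: "continuous_on {0..} x"
    unfolding continuous_on_eq_continuous_within
    by (auto intro: has_vector_derivative_continuous[OF dx])
  have uniqv: "v1 t = u1 t \<and> v2 t = u2 t \<and> v3 t = u3 t \<and> v4 t = u4 t"
    if vs: "tumour_sol \<alpha>1 \<alpha>2 \<beta>2 \<beta>3 \<beta>4 \<delta>1 \<delta>2 \<delta>4 i a1 a2 a3 a4 v1 v2 v3 v4" and t: "t \<ge> 0"
    for v1 v2 v3 v4 t
  proof -
    define y where "y s = (v1 s, v2 s, v3 s, v4 s)" for s
    have y0: "y 0 = x 0" using vs x0 by (simp add: y_def tumour_sol_def)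
    have dy: "(y has_vector_derivative g s (y s)) (at s within {0..})" if s: "s \<ge> 0" for s
    proof -
      from vs s have
        e1: "(v1 has_vector_derivative v1 s * (1 - v1 s - \<alpha>1 * v2 s - \<delta>1 * v3 s)) (at s within {0..})" and
        e2: "(v2 has_vector_derivative \<beta>2 * v2 s * (1 - v2 s - \<alpha>2 * v1 s - \<delta>2 * v4 s)) (at s within {0..})" and
        e3: "(v3 has_vector_derivative \<beta>3 * (v2 s - v3 s)) (at s within {0..})" and
        e4: "(v4 has_vector_derivative \<beta>4 * (i s - v4 s - \<delta>4 * v4 s * v2 s)) (at s within {0..})"
        unfolding tumour_sol_def has_real_derivative_iff_has_vector_derivative by auto
      have "((\<lambda>s. (v1 s, v2 s, v3 s, v4 s)) has_vector_derivative
         (v1 s * (1 - v1 s - \<alpha>1 * v2 s - \<delta>1 * v3 s), \<beta>2 * v2 s * (1 - v2 s - \<alpha>2 * v1 s - \<delta>2 * v4 s),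
          \<beta>3 * (v2 s - v3 s), \<beta>4 * (i s - v4 s - \<delta>4 * v4 s * v2 s))) (at s within {0..})"
        by (intro has_vector_derivative_Pair e1 e2 e3 e4)
      thus ?thesis by (simp add: y_def[abs_def] g_def G_def)
    qed
    have yc: "continuous_on {0..} y"
      unfolding continuous_on_eq_continuous_within
      by (auto intro: has_vector_derivative_continuous[OF dy])
    have "bounded (x ` {0..t})"
      by (intro compact_imp_bounded compact_continuous_image continuous_on_subset[OF xc]) auto
    then obtain Rx where Rx0: "\<forall>z\<in>x ` {0..t}. norm z \<le> Rx" unfolding bounded_iff by blast
    have Rx: "\<And>s. s \<in> {0..t} \<Longrightarrow> norm (x s) \<le> Rx" using Rx0 by blast
    have "bounded (y ` {0..t})"
      by (intro compact_imp_bounded compact_continuous_image continuous_on_subset[OF yc]) auto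
    then obtain Ry where Ry0: "\<forall>z\<in>y ` {0..t}. norm z \<le> Ry" unfolding bounded_iff by blast
    have Ry: "\<And>s. s \<in> {0..t} \<Longrightarrow> norm (y s) \<le> Ry" using Ry0 by blast
    define R where "R = max 0 (max Rx Ry)"
    have "x t = y t"
    proof (rule uniq[OF dx dy y0[symmetric] Knn[of R]])
      show "0 \<le> R" by (simp add: R_def)
      fix s :: real assume "0 \<le> s" "s \<le> t"
      hence "norm (x s) \<le> R" "norm (y s) \<le> R" using Rx[of s] Ry[of s] by (auto simp: R_def)
      thus "norm (g s (x s) - g s (y s)) \<le> K R * norm (x s - y s)" by (rule glip)
    qed (use t in auto)
    thus ?thesis unfolding xsplit y_def by simp
  qed
  show ?thesis
  proof (intro exI conjI)
    show "tumour_sol \<alpha>1 \<alpha>2 \<beta>2 \<beta>3 \<beta>4 \<delta>1 \<delta>2 \<delta>4 i a1 a2 a3 a4 u1 u2 u3 u4" by (rule sol)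
    show "\<forall>t\<ge>0. u1 t \<ge> 0 \<and> u2 t \<ge> 0 \<and> u3 t \<ge> 0 \<and> u4 t \<ge> 0"
      using lo1 lo2 lo3 lo4 by simp
    show "\<forall>v1 v2 v3 v4.
              tumour_sol \<alpha>1 \<alpha>2 \<beta>2 \<beta>3 \<beta>4 \<delta>1 \<delta>2 \<delta>4 i a1 a2 a3 a4 v1 v2 v3 v4 \<longrightarrow>
              (\<forall>t\<ge>0. v1 t = u1 t \<and> v2 t = u2 t \<and> v3 t = u3 t \<and> v4 t = u4 t)"
      by (intro allI impI, rule uniqv)
  qed
qed


end
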